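(* Let $\nu_k$ be a sequence of measures on $\mathbb{C}$, each $C_0$-nice and AD-regular with constant $c_0>0$, converging weakly to a measure $\nu$. Let $z_0\notin\operatorname{supp}(\nu)$ and $z\notin\operatorname{supp}(\nu)$. Then for all sufficiently large $k$, $z_0,z\notin\operatorname{supp}(\nu_k)$, so that $\widetilde{\mathcal{C}}_{\nu_k}(1)(z)=\int[K(z-\xi)-K(z_0-\xi)]\,d\nu_k(\xi)$ is well defined, and $$\widetilde{\mathcal{C}}_{\nu_k}(1)(z)\to\widetilde{\mathcal{C}}_\nu(1)(z)=\int[K(z-\xi)-K(z_0-\xi)]\,d\nu(\xi)\quad(k\to\infty).$$
   Context: Measures are positive locally finite Borel measures on $\mathbb{C}$; weak convergence means $\int\varphi\,d\nu_k\to\int\varphi\,d\nu$ for every continuous compactly supported $\varphi$. $K(z)=1/z$. $\nu$ is $C_0$-nice if $\nu(B(w,r))\le C_0r$ for all open discs; AD-regular with constant $c_0$ if moreover $\nu(B(w,r))\ge c_0r$ for $w\in\operatorname{supp}\nu$, $r>0$. For a nice measure and $z,z_0$ off its support the integral defining $\widetilde{\mathcal{C}}(1)(z)$ converges absolutely. *)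

theory Defs
  imports "HOL-Analysis.Analysis"
begin

definition borel_measure_on_C :: "complex measure \<Rightarrow> bool" where
  "borel_measure_on_C \<nu> \<longleftrightarrow> sets \<nu> = sets borel \<and>
     (\<forall>S. compact S \<longrightarrow> emeasure \<nu> S < \<infinity>)"

definition msupp :: "complex measure \<Rightarrow> complex set" where
  "msupp \<nu> = {w. \<forall>r>0. emeasure \<nu> (ball w r) > 0}"

definition nice :: "real \<Rightarrow> complex measure \<Rightarrow> bool" where
  "nice C0 \<nu> \<longleftrightarrow> (\<forall>w r. r > 0 \<longrightarrow> emeasure \<nu> (ball w r) \<le> ennreal (C0 * r))"

definition AD_regular :: "real \<Rightarrow> real \<Rightarrow> complex measure \<Rightarrow> bool" where
  "AD_regular C0 c0 \<nu> \<longleftrightarrow> nice C0 \<nu> \<and>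
     (\<forall>w r. w \<in> msupp \<nu> \<longrightarrow> r > 0 \<longrightarrow> ennreal (c0 * r) \<le> emeasure \<nu> (ball w r))"

definition weak_conv :: "(nat \<Rightarrow> complex measure) \<Rightarrow> complex measure \<Rightarrow> bool" where
  "weak_conv \<nu>s \<nu> \<longleftrightarrow>
     (\<forall>\<phi> :: complex \<Rightarrow> real. continuous_on UNIV \<phi> \<longrightarrow>
        (\<exists>K. compact K \<and> (\<forall>x. x \<notin> K \<longrightarrow> \<phi> x = 0)) \<longrightarrow>
        (\<lambda>k. integral\<^sup>L (\<nu>s k) \<phi>) \<longlonglongrightarrow> integral\<^sup>L \<nu> \<phi>)"

definition K :: "complex \<Rightarrow> complex" where
  "K z = 1 / z"

definition Ctilde1 :: "complex measure \<Rightarrow> complex \<Rightarrow> complex \<Rightarrow> complex" where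
  "Ctilde1 \<nu> z0 z = (\<integral>\<xi>. (K (z - \<xi>) - K (z0 - \<xi>)) \<partial>\<nu>)"

end

theory Submission
  imports Defs
begin


lemma bm_emeasure_ball_fin:
  assumes "borel_measure_on_C \<mu>"
  shows "emeasure \<mu> (ball c r) < \<infinity>"
proof -
  have "emeasure \<mu> (ball c r) \<le> emeasure \<mu> (cball c r)"
    using assms by (intro emeasure_mono) (auto simp: borel_measure_on_C_def)
  also have "\<dots> < \<infinity>" using assms by (auto simp: borel_measure_on_C_def)
  finally show ?thesis .
qed

lemma bm_sets: "borel_measure_on_C \<mu> \<Longrightarrow> sets \<mu> = sets borel"
  by (simp add: borel_measure_on_C_def)

lemma bm_cont_meas:
  assumes "borel_measure_on_C \<mu>" "continuous_on UNIV f"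
  shows "f \<in> borel_measurable \<mu>"
  using borel_measurable_continuous_onI[OF assms(2)] measurable_cong_sets[OF bm_sets[OF assms(1)] refl]
  by blast

lemma pow_bracket:
  fixes t :: real assumes "1 \<le> t"
  obtains j :: nat where "2^j \<le> t" "t < 2^(Suc j)"
proof -
  obtain n :: nat where n: "t < 2^n" using real_arch_pow[of 2 t] by auto
  define m where "m = (LEAST n::nat. t < 2^n)"
  have m: "t < 2^m" unfolding m_def by (rule LeastI[of _ n]) (rule n)
  have m0: "m \<noteq> 0" using m assms by (cases m) auto
  have "\<not> t < 2^(m-1)" unfolding m_def
    by (rule not_less_Least) (use m0 in \<open>auto simp: m_def\<close>)
  then show ?thesis using that[of "m-1"] m m0 by auto
qed

lemma tail_bound:
  assumes bm: "borel_measure_on_C \<mu>" and nc: "nice C \<mu>" and C: "C \<ge> 0" and R: "R > 0"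
  shows "(\<integral>\<^sup>+ x. indicator {x. R \<le> norm x} x * ennreal (1 / (norm x)^2) \<partial>\<mu>) \<le> ennreal (4*C/R)"
proof -
  define g where "g j x = ennreal (1/(2^j*R)^2) * indicator (ball 0 (2^(Suc j)*R)) x" for j::nat and x::complex
  have pw: "indicator {x. R \<le> norm x} x * ennreal (1 / (norm x)^2) \<le> (\<Sum>j. g j x)" for x
  proof (cases "R \<le> norm x")
    case True
    then have "1 \<le> norm x / R" using R by simp
    then obtain j where j: "2^j \<le> norm x / R" "norm x / R < 2^(Suc j)" by (rule pow_bracket)
    have j1: "2^j * R \<le> norm x" using j R by (simp add: field_simps)
    have j2: "norm x < 2^(Suc j) * R" using j R by (simp add: field_simps)
    have "1 / (norm x)^2 \<le> 1/(2^j*R)^2"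
    proof -
      have p: "0 < 2^j * R" using R by simp
      then have "0 < norm x" using j1 by linarith
      then show ?thesis using j1 p by (intro divide_left_mono power_mono) (auto intro!: mult_pos_pos)
    qed
    then have "indicator {x. R \<le> norm x} x * ennreal (1 / (norm x)^2) \<le> g j x"
      using True j2 by (auto simp: g_def indicator_def intro: ennreal_leI)
    also have "g j x \<le> (\<Sum>j. g j x)"
      using sum_le_suminf[of "\<lambda>j. g j x" "{j}"] by auto
    finally show ?thesis .
  qed (simp)
  have "(\<integral>\<^sup>+ x. indicator {x. R \<le> norm x} x * ennreal (1 / (norm x)^2) \<partial>\<mu>) \<le> (\<integral>\<^sup>+ x. (\<Sum>j. g j x) \<partial>\<mu>)"
    by (rule nn_integral_mono) (rule pw)
  also have "\<dots> = (\<Sum>j. \<integral>\<^sup>+ x. g j x \<partial>\<mu>)"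
    apply (rule nn_integral_suminf) apply (subst measurable_cong_sets[OF bm_sets[OF bm] refl]) unfolding g_def apply measurable by (simp add: pred_def)
  also have "\<dots> = (\<Sum>j. ennreal (1/(2^j*R)^2) * emeasure \<mu> (ball 0 (2^(Suc j)*R)))"
    unfolding g_def using bm_sets[OF bm] by (subst nn_integral_cmult_indicator) auto
  also have "\<dots> \<le> (\<Sum>j. ennreal (2*C/R * (1/2)^j))"
  proof (intro suminf_le allI)
    fix j :: nat
    have "emeasure \<mu> (ball 0 (2^(Suc j)*R)) \<le> ennreal (C * (2^(Suc j)*R))"
      using nc R unfolding nice_def by auto
    then have "ennreal (1/(2^j*R)^2) * emeasure \<mu> (ball 0 (2^(Suc j)*R))
        \<le> ennreal (1/(2^j*R)^2) * ennreal (C * (2^(Suc j)*R))"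
      by (rule mult_left_mono) simp
    also have "\<dots> = ennreal (2*C/R * (1/2)^j)"
      using R C by (subst ennreal_mult'[symmetric]) (auto simp: field_simps power2_eq_square power_mult_distrib)
    finally show "ennreal (1/(2^j*R)^2) * emeasure \<mu> (ball 0 (2^(Suc j)*R)) \<le> ennreal (2*C/R * (1/2)^j)" .
  qed auto
  also have "\<dots> = ennreal (4*C/R)"
  proof (rule suminf_ennreal_eq)
    show "0 \<le> 2*C/R * (1/2)^j" for j using C R by simp
    have "(\<lambda>j. 2*C/R * (1/2::real)^j) sums (2*C/R * (1/(1-1/2)))"
      by (intro sums_mult geometric_sums) simp
    then show "(\<lambda>j. 2*C/R * (1/2::real)^j) sums (4*C/R)" by simp
  qed
  finally show ?thesis .
qed



lemma null_ball:
  assumes bm: "borel_measure_on_C \<mu>" and ns: "\<forall>w\<in>ball c r. w \<notin> msupp \<mu>"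
  shows "emeasure \<mu> (ball c r) = 0"
proof -
  define F where "F = {B. \<exists>w s. B = ball w s \<and> s > 0 \<and> emeasure \<mu> (ball w s) = 0}"
  have opF: "\<And>S. S \<in> F \<Longrightarrow> open S" unfolding F_def by auto
  obtain F' where F': "F' \<subseteq> F" "countable F'" "\<Union>F' = \<Union>F" by (rule Lindelof[OF opF])
  have sub: "ball c r \<subseteq> \<Union>F"
  proof
    fix w assume w: "w \<in> ball c r"
    then have "w \<notin> msupp \<mu>" using ns by auto
    then obtain s where s: "s > 0" "\<not> emeasure \<mu> (ball w s) > 0" unfolding msupp_def by auto
    then have "ball w s \<in> F" unfolding F_def by auto
    moreover have "w \<in> ball w s" using s(1) by simp
    ultimately show "w \<in> \<Union>F" by (rule UnionI)
  qed
  have "(\<Union>S\<in>F'. S) \<in> null_sets \<mu>"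
  proof (rule null_sets_UN')
    show "countable F'" by fact
    fix S assume "S \<in> F'"
    then have "S \<in> F" using F' by auto
    then obtain w s where "S = ball w s" "emeasure \<mu> (ball w s) = 0" unfolding F_def by auto
    moreover have "ball w s \<in> sets \<mu>" using bm_sets[OF bm] by simp
    ultimately show "S \<in> null_sets \<mu>" by (simp add: null_sets_def)
  qed
  then have "\<Union>F \<in> null_sets \<mu>" using F' by simp
  moreover have "ball c r \<in> sets \<mu>" using bm_sets[OF bm] by simp
  ultimately have "ball c r \<in> null_sets \<mu>"
    using sub by (rule null_sets_subset)
  then show ?thesis by (rule null_setsD1)
qed
lemma cc_integrable:
  fixes f :: "complex \<Rightarrow> real"
  assumes bm: "borel_measure_on_C \<mu>" and cf: "continuous_on UNIV f" and S: "compact S"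
    and z: "\<forall>x. x \<notin> S \<longrightarrow> f x = 0"
  shows "integrable \<mu> f"
proof -
  obtain B where B: "\<forall>x\<in>S. norm (f x) \<le> B"
    using compact_imp_bounded[OF compact_continuous_image[OF continuous_on_subset[OF cf] S]]
    by (auto simp: bounded_iff)
  have Ss: "S \<in> sets \<mu>" using bm_sets[OF bm] S by (auto intro: compact_imp_closed borel_closed)
  have fin: "emeasure \<mu> S < \<infinity>" using bm S by (auto simp: borel_measure_on_C_def)
  show ?thesis
  proof (rule integrableI_bounded_set[OF Ss bm_cont_meas[OF bm cf] fin])
    show "AE x in \<mu>. x \<in> S \<longrightarrow> norm (f x) \<le> B" using B by auto
    show "AE x in \<mu>. x \<notin> S \<longrightarrow> f x = 0" using z by auto
  qed
qed

definition bump :: "complex \<Rightarrow> real \<Rightarrow> complex \<Rightarrow> real" where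
  "bump c \<rho> x = max 0 (1 - dist x c / \<rho>)"

lemma bump_cont: "\<rho> > 0 \<Longrightarrow> continuous_on UNIV (bump c \<rho>)"
  unfolding bump_def by (intro continuous_intros) auto

lemma bump_zero: "\<rho> > 0 \<Longrightarrow> x \<notin> ball c \<rho> \<Longrightarrow> bump c \<rho> x = 0"
  unfolding bump_def by (simp add: dist_commute le_divide_eq)

lemma bump_zero': "\<rho> > 0 \<Longrightarrow> x \<notin> cball c \<rho> \<Longrightarrow> bump c \<rho> x = 0"
  using bump_zero[of \<rho> x c] by auto

lemma eventually_null_ball:
  fixes \<nu>s :: "nat \<Rightarrow> complex measure"
  assumes meas: "\<And>k. borel_measure_on_C (\<nu>s k)" and bmn: "borel_measure_on_C \<nu>"
    and c0: "c0 > 0"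
    and reg: "\<And>k. AD_regular C0 c0 (\<nu>s k)"
    and conv: "weak_conv \<nu>s \<nu>" and \<rho>: "\<rho> > 0" and n0: "emeasure \<nu> (ball c \<rho>) = 0"
  shows "\<forall>\<^sub>F k in sequentially. emeasure (\<nu>s k) (ball c (\<rho>/2)) = 0"
proof -
  let ?\<phi> = "bump c \<rho>"
  have lim: "(\<lambda>k. integral\<^sup>L (\<nu>s k) ?\<phi>) \<longlonglongrightarrow> integral\<^sup>L \<nu> ?\<phi>"
    using conv bump_cont[OF \<rho>, of c] bump_zero'[OF \<rho>, of _ c] unfolding weak_conv_def
    by (metis compact_cball)
  have "integral\<^sup>L \<nu> ?\<phi> = 0"
  proof (rule integral_eq_zero_AE)
    have "ball c \<rho> \<in> null_sets \<nu>" using n0 bm_sets[OF bmn] by (auto simp: null_sets_def)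
    then show "AE x in \<nu>. ?\<phi> x = 0"
      by (rule AE_I') (auto, metis bump_zero[OF \<rho>] mem_ball)
  qed
  with lim have "\<forall>\<^sub>F k in sequentially. integral\<^sup>L (\<nu>s k) ?\<phi> < c0 * \<rho> / 16"
    using c0 \<rho> by (intro order_tendstoD) auto
  then show ?thesis
  proof eventually_elim
    case (elim k)
    have "\<forall>w\<in>ball c (\<rho>/2). w \<notin> msupp (\<nu>s k)"
    proof (intro ballI notI)
      fix w assume w: "w \<in> ball c (\<rho>/2)" and ws: "w \<in> msupp (\<nu>s k)"
      have low: "ennreal (c0 * (\<rho>/4)) \<le> emeasure (\<nu>s k) (ball w (\<rho>/4))"
        using reg[of k] ws \<rho> unfolding AD_regular_def by (metis divide_pos_pos zero_less_numeral)
      have int: "integrable (\<nu>s k) ?\<phi>"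
        by (rule cc_integrable[OF meas bump_cont[OF \<rho>] compact_cball[of c \<rho>]]) (auto simp: bump_zero'[OF \<rho>])
      have pw: "(1/4) * indicator (ball w (\<rho>/4)) x \<le> ?\<phi> x" for x
      proof (cases "x \<in> ball w (\<rho>/4)")
        case True
        then have "dist x c < 3*\<rho>/4" using w dist_triangle[of x c w]
          by (auto simp: dist_commute)
        then show ?thesis using True \<rho> by (auto simp: bump_def field_simps)
      qed (auto simp: bump_def)
      have "ennreal (c0 * \<rho> / 16) = ennreal (1/4) * ennreal (c0 * (\<rho>/4))"
        using c0 \<rho> by (subst ennreal_mult'[symmetric]) auto
      also have "\<dots> \<le> ennreal (1/4) * emeasure (\<nu>s k) (ball w (\<rho>/4))"
        by (rule mult_left_mono[OF low]) simp
      also have "\<dots> = (\<integral>\<^sup>+ x. ennreal (1/4) * indicator (ball w (\<rho>/4)) x \<partial>\<nu>s k)"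
        using bm_sets[OF meas[of k]] by (subst nn_integral_cmult_indicator) auto
      also have "\<dots> \<le> (\<integral>\<^sup>+ x. ennreal (?\<phi> x) \<partial>\<nu>s k)"
      proof (intro nn_integral_mono)
        fix x
        have "ennreal (1/4) * indicator (ball w (\<rho>/4)) x = ennreal ((1/4) * indicator (ball w (\<rho>/4)) x)"
          by (simp add: indicator_def)
        also have "\<dots> \<le> ennreal (?\<phi> x)" by (rule ennreal_leI[OF pw])
        finally show "ennreal (1/4) * indicator (ball w (\<rho>/4)) x \<le> ennreal (?\<phi> x)" .
      qed
      also have "\<dots> = ennreal (integral\<^sup>L (\<nu>s k) ?\<phi>)"
        by (rule nn_integral_eq_integral[OF int]) (auto simp: bump_def)
      finally have "c0 * \<rho> / 16 \<le> integral\<^sup>L (\<nu>s k) ?\<phi>"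
        by (subst (asm) ennreal_le_iff) (auto intro!: integral_nonneg_AE simp: bump_def)
      then show False using elim by simp
    qed
    then show ?case by (rule null_ball[OF meas])
  qed
qed



definition chi :: "nat \<Rightarrow> complex \<Rightarrow> real" where
  "chi n x = max 0 (min 1 (real n + 1 - norm x))"

lemma chi_cont: "continuous_on UNIV (chi n)"
  unfolding chi_def by (intro continuous_intros)

lemma chi_01: "0 \<le> chi n x" "chi n x \<le> 1"
  by (auto simp: chi_def)

lemma chi_one: "norm x \<le> real n \<Longrightarrow> chi n x = 1"
  by (auto simp: chi_def)

lemma chi_zero: "x \<notin> cball 0 (real n + 1) \<Longrightarrow> chi n x = 0"
  by (auto simp: chi_def)

lemma chi_mono: "m \<le> n \<Longrightarrow> chi m x \<le> chi n x"
  unfolding chi_def by (intro max.mono min.mono) auto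

lemma abs_diff_chi: "\<bar>F x - F x * chi n x\<bar> \<le> \<bar>F x\<bar> * indicator {x. real n \<le> norm x} x"
proof (cases "real n \<le> norm x")
  case True
  have "\<bar>F x - F x * chi n x\<bar> = \<bar>F x\<bar> * (1 - chi n x)"
  proof -
    have "F x - F x * chi n x = F x * (1 - chi n x)" by (simp add: algebra_simps)
    then show ?thesis using chi_01[of n x] by (simp add: abs_mult)
  qed
  also have "\<dots> \<le> \<bar>F x\<bar>" using chi_01[of n x] by (simp add: mult_left_le)
  finally show ?thesis using True by simp
next
  case False then show ?thesis by (simp add: chi_one)
qed

lemma tailF:
  fixes F :: "complex \<Rightarrow> real"
  assumes bm: "borel_measure_on_C \<mu>" and nc: "nice C \<mu>" and C: "C \<ge> 0"
    and tl: "\<And>x. R0 \<le> norm x \<Longrightarrow> \<bar>F x\<bar> \<le> A / (norm x)^2" and R0: "R0 > 0" and A: "A \<ge> 0"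
    and R: "R \<ge> R0"
  shows "(\<integral>\<^sup>+ x. ennreal (\<bar>F x\<bar> * indicator {x. R \<le> norm x} x) \<partial>\<mu>) \<le> ennreal (A * (4*C/R))"
proof -
  have "(\<integral>\<^sup>+ x. ennreal (\<bar>F x\<bar> * indicator {x. R \<le> norm x} x) \<partial>\<mu>)
      \<le> (\<integral>\<^sup>+ x. ennreal A * (indicator {x. R \<le> norm x} x * ennreal (1 / (norm x)^2)) \<partial>\<mu>)"
  proof (intro nn_integral_mono)
    fix x
    show "ennreal (\<bar>F x\<bar> * indicator {x. R \<le> norm x} x) \<le> ennreal A * (indicator {x. R \<le> norm x} x * ennreal (1 / (norm x)^2))"
    proof (cases "R \<le> norm x")
      case True
      have "\<bar>F x\<bar> \<le> A * (1 / (norm x)^2)" using tl[of x] True R by simp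
      then have "ennreal \<bar>F x\<bar> \<le> ennreal A * ennreal (1 / (norm x)^2)"
        using A by (simp add: ennreal_mult'[symmetric] ennreal_leI)
      then show ?thesis using True by simp
    qed simp
  qed
  also have "\<dots> = ennreal A * (\<integral>\<^sup>+ x. indicator {x. R \<le> norm x} x * ennreal (1 / (norm x)^2) \<partial>\<mu>)"
    apply (rule nn_integral_cmult)
    apply (subst measurable_cong_sets[OF bm_sets[OF bm] refl])
    by measurable
  also have "\<dots> \<le> ennreal A * ennreal (4*C/R)"
    by (rule mult_left_mono[OF tail_bound[OF bm nc C]]) (use R R0 in auto)
  also have "\<dots> = ennreal (A * (4*C/R))" using A C R R0 by (simp add: ennreal_mult'[symmetric])
  finally show ?thesis .
qed



lemma conv_real:
  fixes F :: "complex \<Rightarrow> real" and \<mu>s :: "nat \<Rightarrow> complex measure"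
  assumes meas: "\<And>k. borel_measure_on_C (\<mu>s k)" and bm: "borel_measure_on_C \<mu>"
    and nc: "\<And>k. nice C (\<mu>s k)" and C: "C \<ge> 0" and conv: "weak_conv \<mu>s \<mu>"
    and cF: "continuous_on UNIV F" and bnd: "\<And>x. \<bar>F x\<bar> \<le> B"
    and tl: "\<And>x. R0 \<le> norm x \<Longrightarrow> \<bar>F x\<bar> \<le> A / (norm x)^2" and R0: "R0 > 0" and A: "A \<ge> 0"
  shows "integrable \<mu> F \<and> (\<forall>k. integrable (\<mu>s k) F) \<and>
         (\<lambda>k. integral\<^sup>L (\<mu>s k) F) \<longlonglongrightarrow> integral\<^sup>L \<mu> F"
proof -
  define \<phi> where "\<phi> n x = F x * chi n x" for n x
  have B: "B \<ge> 0" using bnd[of 0] by linarith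
  have c\<phi>: "continuous_on UNIV (\<phi> n)" for n
    unfolding \<phi>_def by (intro continuous_intros cF chi_cont)
  have c\<phi>a: "continuous_on UNIV (\<lambda>x. \<bar>\<phi> n x\<bar>)" for n
    by (intro continuous_intros c\<phi>)
  have z\<phi>: "\<forall>x. x \<notin> cball 0 (real n + 1) \<longrightarrow> \<phi> n x = 0" for n
    by (auto simp: \<phi>_def chi_zero)
  have z\<phi>a: "\<forall>x. x \<notin> cball 0 (real n + 1) \<longrightarrow> \<bar>\<phi> n x\<bar> = 0" for n
    using z\<phi>[of n] by auto
  have int\<phi>: "integrable \<nu> (\<phi> n)" if "borel_measure_on_C \<nu>" for \<nu> n
    by (rule cc_integrable[OF that c\<phi> compact_cball z\<phi>])
  have lim\<phi>: "(\<lambda>k. integral\<^sup>L (\<mu>s k) (\<phi> n)) \<longlonglongrightarrow> integral\<^sup>L \<mu> (\<phi> n)" for n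
    using conv c\<phi>[of n] z\<phi>[of n] unfolding weak_conv_def by (metis compact_cball)
  have lim\<phi>a: "(\<lambda>k. integral\<^sup>L (\<mu>s k) (\<lambda>x. \<bar>\<phi> n x\<bar>)) \<longlonglongrightarrow> integral\<^sup>L \<mu> (\<lambda>x. \<bar>\<phi> n x\<bar>)" for n
    using conv c\<phi>a[of n] z\<phi>a[of n] unfolding weak_conv_def by (metis compact_cball)
  have measF: "F \<in> borel_measurable \<nu>" if "borel_measure_on_C \<nu>" for \<nu>
    by (rule bm_cont_meas[OF that cF])
  define M where "M = B * (C * R0) + A * (4*C/R0)"
  have M: "M \<ge> 0" using B C R0 A by (simp add: M_def)
  have nnF: "(\<integral>\<^sup>+ x. ennreal \<bar>F x\<bar> \<partial>\<mu>s k) \<le> ennreal M" for k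
  proof -
    have "(\<integral>\<^sup>+ x. ennreal \<bar>F x\<bar> \<partial>\<mu>s k) \<le> (\<integral>\<^sup>+ x. ennreal B * indicator (ball 0 R0) x
          + ennreal (\<bar>F x\<bar> * indicator {x. R0 \<le> norm x} x) \<partial>\<mu>s k)"
    proof (intro nn_integral_mono)
      fix x show "ennreal \<bar>F x\<bar> \<le> ennreal B * indicator (ball 0 R0) x
          + ennreal (\<bar>F x\<bar> * indicator {x. R0 \<le> norm x} x)"
      proof (cases "R0 \<le> norm x")
        case True then show ?thesis by simp
      next
        case False then show ?thesis using bnd[of x] by (simp add: ennreal_leI)
      qed
    qed
    also have "\<dots> = (\<integral>\<^sup>+ x. ennreal B * indicator (ball 0 R0) x \<partial>\<mu>s k)
          + (\<integral>\<^sup>+ x. ennreal (\<bar>F x\<bar> * indicator {x. R0 \<le> norm x} x) \<partial>\<mu>s k)"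
      apply (rule nn_integral_add)
      apply (subst measurable_cong_sets[OF bm_sets[OF meas] refl], measurable)
      apply (simp add: pred_def)
      apply (subst measurable_cong_sets[OF bm_sets[OF meas] refl])
      using borel_measurable_continuous_onI[OF cF] apply measurable
      done
    also have "\<dots> \<le> ennreal (B * (C * R0)) + ennreal (A * (4*C/R0))"
    proof (intro add_mono)
      have "(\<integral>\<^sup>+ x. ennreal B * indicator (ball 0 R0) x \<partial>\<mu>s k) = ennreal B * emeasure (\<mu>s k) (ball 0 R0)"
        using bm_sets[OF meas[of k]] by (subst nn_integral_cmult_indicator) auto
      also have "\<dots> \<le> ennreal B * ennreal (C * R0)"
        using nc[of k] R0 unfolding nice_def by (intro mult_left_mono) auto
      also have "\<dots> = ennreal (B * (C * R0))" using B by (simp add: ennreal_mult'[symmetric])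
      finally show "(\<integral>\<^sup>+ x. ennreal B * indicator (ball 0 R0) x \<partial>\<mu>s k) \<le> ennreal (B * (C * R0))" .
      show "(\<integral>\<^sup>+ x. ennreal (\<bar>F x\<bar> * indicator {x. R0 \<le> norm x} x) \<partial>\<mu>s k) \<le> ennreal (A * (4*C/R0))"
        by (rule tailF[OF meas nc C tl R0 A]) auto
    qed
    also have "\<dots> = ennreal M" using B C R0 A by (simp add: M_def ennreal_plus[symmetric] del: ennreal_plus)
    finally show ?thesis .
  qed
  have intk: "integrable (\<mu>s k) F" for k
    by (rule integrableI_bounded[OF measF[OF meas]]) (use nnF[of k] in \<open>auto simp: order_le_less_trans\<close>)
  have intFa: "integral\<^sup>L (\<mu>s k) (\<lambda>x. \<bar>F x\<bar>) \<le> M" for k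
  proof -
    have "ennreal (integral\<^sup>L (\<mu>s k) (\<lambda>x. \<bar>F x\<bar>)) = (\<integral>\<^sup>+ x. ennreal \<bar>F x\<bar> \<partial>\<mu>s k)"
      by (rule nn_integral_eq_integral[symmetric]) (use intk in auto)
    with nnF[of k] ennreal_le_iff[OF M] show ?thesis by metis
  qed
  have int\<phi>M: "integral\<^sup>L \<mu> (\<lambda>x. \<bar>\<phi> n x\<bar>) \<le> M" for n
  proof (rule LIMSEQ_le_const2[OF lim\<phi>a])
    show "\<exists>N. \<forall>k\<ge>N. integral\<^sup>L (\<mu>s k) (\<lambda>x. \<bar>\<phi> n x\<bar>) \<le> M"
    proof (intro exI allI impI)
      fix k
      have "integral\<^sup>L (\<mu>s k) (\<lambda>x. \<bar>\<phi> n x\<bar>) \<le> integral\<^sup>L (\<mu>s k) (\<lambda>x. \<bar>F x\<bar>)"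
        apply (rule integral_mono)
        using integrable_abs[OF int\<phi>[OF meas]] apply simp
        using intk apply simp
        using chi_01 by (auto simp: \<phi>_def abs_mult mult_left_le)
      then show "integral\<^sup>L (\<mu>s k) (\<lambda>x. \<bar>\<phi> n x\<bar>) \<le> M" using intFa[of k] by simp
    qed
  qed
  have intF: "integrable \<mu> F"
  proof (rule integrableI_bounded[OF measF[OF bm]])
    have eq: "(\<lambda>x. ennreal (norm (F x))) = (\<lambda>x. SUP n. ennreal \<bar>\<phi> n x\<bar>)"
    proof
      fix x
      show "ennreal (norm (F x)) = (SUP n. ennreal \<bar>\<phi> n x\<bar>)"
      proof (rule antisym)
        obtain n :: nat where n: "norm x \<le> real n" using real_arch_simple by blast
        have "ennreal (norm (F x)) = ennreal \<bar>\<phi> n x\<bar>" using chi_one[OF n] by (simp add: \<phi>_def)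
        also have "\<dots> \<le> (SUP n. ennreal \<bar>\<phi> n x\<bar>)" by (rule SUP_upper) simp
        finally show "ennreal (norm (F x)) \<le> (SUP n. ennreal \<bar>\<phi> n x\<bar>)" .
        show "(SUP n. ennreal \<bar>\<phi> n x\<bar>) \<le> ennreal (norm (F x))"
          using chi_01 by (intro SUP_least ennreal_leI) (auto simp: \<phi>_def abs_mult mult_left_le)
      qed
    qed
    have inc: "incseq (\<lambda>n x. ennreal \<bar>\<phi> n x\<bar>)"
      unfolding incseq_def
      using chi_mono chi_01 by (auto intro!: le_funI ennreal_leI simp: \<phi>_def abs_mult mult_left_mono)
    have "(\<integral>\<^sup>+ x. ennreal (norm (F x)) \<partial>\<mu>) = (SUP n. \<integral>\<^sup>+ x. ennreal \<bar>\<phi> n x\<bar> \<partial>\<mu>)"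
      unfolding eq
    proof (rule nn_integral_monotone_convergence_SUP[OF inc])
      fix n show "(\<lambda>x. ennreal \<bar>\<phi> n x\<bar>) \<in> borel_measurable \<mu>"
        using bm_cont_meas[OF bm c\<phi>a[of n]] by measurable
    qed
    also have "\<dots> \<le> ennreal M"
    proof (rule SUP_least)
      fix n
      have "(\<integral>\<^sup>+ x. ennreal \<bar>\<phi> n x\<bar> \<partial>\<mu>) = ennreal (integral\<^sup>L \<mu> (\<lambda>x. \<bar>\<phi> n x\<bar>))"
        by (rule nn_integral_eq_integral) (use int\<phi>[OF bm] in auto)
      also have "\<dots> \<le> ennreal M" using int\<phi>M[of n] by (rule ennreal_leI)
      finally show "(\<integral>\<^sup>+ x. ennreal \<bar>\<phi> n x\<bar> \<partial>\<mu>) \<le> ennreal M" .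
    qed
    finally show "(\<integral>\<^sup>+ x. ennreal (norm (F x)) \<partial>\<mu>) < \<infinity>" by (simp add: order_le_less_trans)
  qed
  have tlim: "(\<lambda>n. integral\<^sup>L \<mu> (\<lambda>x. \<bar>F x - \<phi> n x\<bar>)) \<longlonglongrightarrow> 0"
  proof -
    have "(\<lambda>n. integral\<^sup>L \<mu> (\<lambda>x. \<bar>F x - \<phi> n x\<bar>)) \<longlonglongrightarrow> integral\<^sup>L \<mu> (\<lambda>x. 0::real)"
    proof (rule integral_dominated_convergence[where w="\<lambda>x. \<bar>F x\<bar>"])
      show "(\<lambda>x. 0::real) \<in> borel_measurable \<mu>" by simp
      show "(\<lambda>x. \<bar>F x - \<phi> n x\<bar>) \<in> borel_measurable \<mu>" for n
        using measF[OF bm] bm_cont_meas[OF bm c\<phi>[of n]] by measurable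
      show "integrable \<mu> (\<lambda>x. \<bar>F x\<bar>)" using intF by simp
      show "AE x in \<mu>. (\<lambda>n. \<bar>F x - \<phi> n x\<bar>) \<longlonglongrightarrow> 0"
      proof (rule AE_I2)
        fix x :: complex
        obtain N :: nat where N: "norm x \<le> real N" using real_arch_simple by blast
        show "(\<lambda>n. \<bar>F x - \<phi> n x\<bar>) \<longlonglongrightarrow> 0"
        proof (rule tendsto_eventually, rule eventually_sequentiallyI[of N])
          fix n assume "N \<le> n"
          then have "norm x \<le> real n" using N by linarith
          then show "\<bar>F x - \<phi> n x\<bar> = 0" by (simp add: \<phi>_def chi_one)
        qed
      qed
      show "AE x in \<mu>. norm \<bar>F x - \<phi> n x\<bar> \<le> \<bar>F x\<bar>" for n
      proof (rule AE_I2)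
        fix x
        have "\<bar>F x\<bar> * indicator {x. real n \<le> norm x} x \<le> \<bar>F x\<bar>" by (simp add: indicator_def)
        then show "norm \<bar>F x - \<phi> n x\<bar> \<le> \<bar>F x\<bar>" using abs_diff_chi[of F x n] by (simp add: \<phi>_def)
      qed
    qed
    then show ?thesis by simp
  qed
  have tk: "integral\<^sup>L (\<mu>s k) (\<lambda>x. \<bar>F x - \<phi> n x\<bar>) \<le> A * (4*C/real n)" if n: "R0 \<le> real n" for k n
  proof -
    have intd: "integrable (\<mu>s k) (\<lambda>x. \<bar>F x - \<phi> n x\<bar>)"
      using intk int\<phi>[OF meas] by auto
    have "ennreal (integral\<^sup>L (\<mu>s k) (\<lambda>x. \<bar>F x - \<phi> n x\<bar>)) = (\<integral>\<^sup>+ x. ennreal \<bar>F x - \<phi> n x\<bar> \<partial>\<mu>s k)"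
      by (rule nn_integral_eq_integral[symmetric, OF intd]) auto
    also have "\<dots> \<le> (\<integral>\<^sup>+ x. ennreal (\<bar>F x\<bar> * indicator {x. real n \<le> norm x} x) \<partial>\<mu>s k)"
      by (intro nn_integral_mono ennreal_leI) (simp add: \<phi>_def abs_diff_chi)
    also have "\<dots> \<le> ennreal (A * (4*C/real n))"
      by (rule tailF[OF meas nc C tl R0 A n])
    finally have "ennreal (integral\<^sup>L (\<mu>s k) (\<lambda>x. \<bar>F x - \<phi> n x\<bar>)) \<le> ennreal (A * (4*C/real n))" .
    moreover have "0 \<le> A * (4*C/real n)" using A C by simp
    ultimately show ?thesis using ennreal_le_iff by blast
  qed
  have main: "(\<lambda>k. integral\<^sup>L (\<mu>s k) F) \<longlonglongrightarrow> integral\<^sup>L \<mu> F"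
  proof (rule tendstoI)
    fix e :: real assume e: "e > 0"
    obtain N0 :: nat where N0: "R0 \<le> real N0" using real_arch_simple by blast
    have ev1: "\<forall>\<^sub>F n in sequentially. R0 \<le> real n"
    proof (rule eventually_sequentiallyI[of N0])
      fix n assume "N0 \<le> n"
      then have "real N0 \<le> real n" by simp
      then show "R0 \<le> real n" using N0 by linarith
    qed
    have "(\<lambda>n. A * (4*C) * inverse (real n)) \<longlonglongrightarrow> 0"
      by (rule tendsto_mult_right_zero[OF lim_inverse_n])
    moreover have "0 < e/3" using e by simp
    ultimately have "\<forall>\<^sub>F n in sequentially. A * (4*C) * inverse (real n) < e/3"
      by (rule order_tendstoD(2))
    then have ev2: "\<forall>\<^sub>F n in sequentially. A * (4*C/real n) < e/3"
      by (simp only: divide_inverse mult.assoc)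
    have ev3: "\<forall>\<^sub>F n in sequentially. integral\<^sup>L \<mu> (\<lambda>x. \<bar>F x - \<phi> n x\<bar>) < e/3"
      using order_tendstoD(2)[OF tlim \<open>0 < e/3\<close>] .
    obtain n where n1: "R0 \<le> real n" and n2: "A * (4*C/real n) < e/3"
      and n3: "integral\<^sup>L \<mu> (\<lambda>x. \<bar>F x - \<phi> n x\<bar>) < e/3"
    proof -
      obtain N where N: "\<forall>n\<ge>N. R0 \<le> real n \<and> A * (4*C/real n) < e/3 \<and> integral\<^sup>L \<mu> (\<lambda>x. \<bar>F x - \<phi> n x\<bar>) < e/3"
        using eventually_conj[OF ev1 eventually_conj[OF ev2 ev3]] unfolding eventually_sequentially by blast
      have "R0 \<le> real N \<and> A * (4*C/real N) < e/3 \<and> integral\<^sup>L \<mu> (\<lambda>x. \<bar>F x - \<phi> N x\<bar>) < e/3"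
        using N[rule_format, OF order_refl] .
      then show ?thesis using that by (elim conjE)
    qed
    have ev4: "\<forall>\<^sub>F k in sequentially. dist (integral\<^sup>L (\<mu>s k) (\<phi> n)) (integral\<^sup>L \<mu> (\<phi> n)) < e/3"
      using tendstoD[OF lim\<phi>[of n] \<open>0 < e/3\<close>] .
    show "\<forall>\<^sub>F k in sequentially. dist (integral\<^sup>L (\<mu>s k) F) (integral\<^sup>L \<mu> F) < e"
      using ev4
    proof eventually_elim
      case (elim k)
      have a: "\<bar>integral\<^sup>L (\<mu>s k) F - integral\<^sup>L (\<mu>s k) (\<phi> n)\<bar> \<le> A * (4*C/real n)"
      proof -
        have "integral\<^sup>L (\<mu>s k) F - integral\<^sup>L (\<mu>s k) (\<phi> n) = integral\<^sup>L (\<mu>s k) (\<lambda>x. F x - \<phi> n x)"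
          by (rule Bochner_Integration.integral_diff[symmetric, OF intk int\<phi>[OF meas]])
        also have "\<bar>\<dots>\<bar> \<le> integral\<^sup>L (\<mu>s k) (\<lambda>x. \<bar>F x - \<phi> n x\<bar>)"
          using integral_norm_bound[of "\<mu>s k" "\<lambda>x. F x - \<phi> n x"] by simp
        finally show ?thesis using tk[OF n1, of k] by simp
      qed
      have b: "\<bar>integral\<^sup>L \<mu> (\<phi> n) - integral\<^sup>L \<mu> F\<bar> \<le> integral\<^sup>L \<mu> (\<lambda>x. \<bar>F x - \<phi> n x\<bar>)"
      proof -
        have "integral\<^sup>L \<mu> F - integral\<^sup>L \<mu> (\<phi> n) = integral\<^sup>L \<mu> (\<lambda>x. F x - \<phi> n x)"
          by (rule Bochner_Integration.integral_diff[symmetric, OF intF int\<phi>[OF bm]])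
        also have "\<bar>\<dots>\<bar> \<le> integral\<^sup>L \<mu> (\<lambda>x. \<bar>F x - \<phi> n x\<bar>)"
          using integral_norm_bound[of "\<mu>" "\<lambda>x. F x - \<phi> n x"] by simp
        finally show ?thesis by (simp add: abs_minus_commute)
      qed
      have c: "\<bar>integral\<^sup>L (\<mu>s k) (\<phi> n) - integral\<^sup>L \<mu> (\<phi> n)\<bar> < e/3"
        using elim by (simp add: dist_real_def)
      show ?case using a b c n2 n3 unfolding dist_real_def by linarith
    qed
  qed
  show ?thesis using intF intk main by blast
qed



definition Kc :: "real \<Rightarrow> complex \<Rightarrow> complex" where
  "Kc \<delta> w = cnj w / complex_of_real ((max (norm w) \<delta>)^2)"

lemma Kc_cont: "\<delta> > 0 \<Longrightarrow> continuous_on UNIV (Kc \<delta>)"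
  unfolding Kc_def by (intro continuous_intros) auto

lemma Kc_eq: "norm w \<ge> \<delta> \<Longrightarrow> Kc \<delta> w = K w"
  unfolding Kc_def K_def using complex_div_cnj[of 1 w] by (simp add: max_def)


lemma Kc_bound: assumes "\<delta> > 0" shows "norm (Kc \<delta> w) \<le> 1/\<delta>"
proof -
  let ?m = "max (norm w) \<delta>"
  have m: "?m > 0" using assms by simp
  have "norm (Kc \<delta> w) = norm w / ?m^2"
    unfolding Kc_def by (simp add: norm_divide norm_power)
  also have "\<dots> \<le> ?m / ?m^2" using m by (intro divide_right_mono) auto
  also have "\<dots> = 1 / ?m" using m by (simp add: power2_eq_square)
  also have "\<dots> \<le> 1/\<delta>" using assms by (intro divide_left_mono) auto
  finally show ?thesis .
qed

lemma AE_F: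
  assumes bm: "borel_measure_on_C \<mu>" and a: "emeasure \<mu> (ball z \<delta>) = 0" and b: "emeasure \<mu> (ball z0 \<delta>) = 0"
  shows "AE x in \<mu>. Kc \<delta> (z - x) - Kc \<delta> (z0 - x) = K (z - x) - K (z0 - x)"
proof -
  have N: "ball z \<delta> \<union> ball z0 \<delta> \<in> null_sets \<mu>"
    using a b bm_sets[OF bm] by (intro null_sets.Un) (auto simp: null_sets_def)
  show ?thesis
  proof (rule AE_I'[OF N], intro subsetI)
    fix x assume "x \<in> {x \<in> space \<mu>. \<not> (Kc \<delta> (z - x) - Kc \<delta> (z0 - x) = K (z - x) - K (z0 - x))}"
    then have ne: "Kc \<delta> (z - x) - Kc \<delta> (z0 - x) \<noteq> K (z - x) - K (z0 - x)" by simp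
    show "x \<in> ball z \<delta> \<union> ball z0 \<delta>"
    proof (rule ccontr)
      assume "x \<notin> ball z \<delta> \<union> ball z0 \<delta>"
      then have "norm (z - x) \<ge> \<delta>" "norm (z0 - x) \<ge> \<delta>" by (auto simp: dist_norm)
      then show False using ne by (simp add: Kc_eq)
    qed
  qed
qed

lemma F_tail:
  assumes \<delta>: "\<delta> > 0" and x: "2*(norm z + norm z0) + 2*\<delta> \<le> norm x"
  shows "norm (Kc \<delta> (z - x) - Kc \<delta> (z0 - x)) \<le> 4 * norm (z - z0) / (norm x)^2"
proof -
  have x': "2*norm z + 2*norm z0 + 2*\<delta> \<le> norm x" using x by (simp add: algebra_simps)
  have x0: "norm x > 0" using x' \<delta> norm_ge_zero[of z] norm_ge_zero[of z0] by linarith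
  have t1: "norm x - norm z \<le> norm (z - x)" using norm_triangle_ineq2[of x z] by (simp add: norm_minus_commute)
  have t2: "norm x - norm z0 \<le> norm (z0 - x)" using norm_triangle_ineq2[of x z0] by (simp add: norm_minus_commute)
  have "norm x \<le> 2 * norm (z - x)"
    using t1 x norm_ge_zero[of z0] norm_ge_zero[of z] \<delta> by (smt (verit))
  then have h1: "norm (z - x) \<ge> norm x / 2" by simp
  have "norm x \<le> 2 * norm (z0 - x)"
    using t2 x norm_ge_zero[of z0] norm_ge_zero[of z] \<delta> by (smt (verit))
  then have h2: "norm (z0 - x) \<ge> norm x / 2" by simp
  have d1: "norm (z - x) \<ge> \<delta>" using h1 x' norm_ge_zero[of z] norm_ge_zero[of z0] by linarith
  have d2: "norm (z0 - x) \<ge> \<delta>" using h2 x' norm_ge_zero[of z] norm_ge_zero[of z0] by linarith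
  have nz1: "z - x \<noteq> 0" using d1 \<delta> by auto
  have nz2: "z0 - x \<noteq> 0" using d2 \<delta> by auto
  have "Kc \<delta> (z - x) - Kc \<delta> (z0 - x) = 1/(z - x) - 1/(z0 - x)"
    using d1 d2 by (simp add: Kc_eq K_def)
  also have "\<dots> = (z0 - z) / ((z - x) * (z0 - x))"
    using nz1 nz2 by (simp add: field_simps)
  finally have eq: "Kc \<delta> (z - x) - Kc \<delta> (z0 - x) = (z0 - z) / ((z - x) * (z0 - x))" .
  have "norm ((z0 - z) / ((z - x) * (z0 - x))) = norm (z - z0) / (norm (z - x) * norm (z0 - x))"
    by (simp add: norm_divide norm_mult norm_minus_commute)
  also have "\<dots> \<le> norm (z - z0) / ((norm x / 2) * (norm x / 2))"
    using h1 h2 x0 nz1 nz2 by (intro divide_left_mono mult_mono) (auto intro!: mult_pos_pos)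
  also have "\<dots> = 4 * norm (z - z0) / (norm x)^2" by (simp add: power2_eq_square field_simps)
  finally show ?thesis using eq by simp
qed

lemma integrable_from_ReIm:
  fixes G :: "'a \<Rightarrow> complex"
  assumes "integrable M (\<lambda>x. Re (G x))" "integrable M (\<lambda>x. Im (G x))"
  shows "integrable M G"
proof -
  have "integrable M (\<lambda>x. complex_of_real (Re (G x)) + \<i> * complex_of_real (Im (G x)))"
    using assms by (intro Bochner_Integration.integrable_add Bochner_Integration.integrable_mult_right) (auto simp: complex_of_real_integrable_eq)
  moreover have "(\<lambda>x. complex_of_real (Re (G x)) + \<i> * complex_of_real (Im (G x))) = G"
    by (rule ext) (simp add: complex_eq_iff)
  ultimately show ?thesis by simp
qed

lemma f_meas: "borel_measure_on_C \<mu> \<Longrightarrow> (\<lambda>x. K (z - x) - K (z0 - x)) \<in> borel_measurable \<mu>"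
  apply (subst measurable_cong_sets[OF bm_sets refl], assumption)
  unfolding K_def by measurable

lemma nice_max: "nice C0 \<nu> \<Longrightarrow> nice (max C0 0) \<nu>"
  unfolding nice_def
proof (intro allI impI)
  fix w r assume h: "\<forall>w r. 0 < r \<longrightarrow> emeasure \<nu> (ball w r) \<le> ennreal (C0 * r)" and r: "(0::real) < r"
  have "ennreal (C0 * r) \<le> ennreal (max C0 0 * r)" using r by (intro ennreal_leI mult_right_mono) auto
  then show "emeasure \<nu> (ball w r) \<le> ennreal (max C0 0 * r)" using h r by (meson order_trans)
qed


theorem mainTheorem13:
  fixes \<nu>s :: "nat \<Rightarrow> complex measure" and \<nu> :: "complex measure"
    and C0 c0 :: real and z0 z :: complex
  assumes meas: "\<And>k. borel_measure_on_C (\<nu>s k)" and "borel_measure_on_C \<nu>"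
    and c0: "c0 > 0"
    and reg: "\<And>k. AD_regular C0 c0 (\<nu>s k)"
    and conv: "weak_conv \<nu>s \<nu>"
    and z0: "z0 \<notin> msupp \<nu>" and z: "z \<notin> msupp \<nu>"
  shows "(\<forall>\<^sub>F k in sequentially. z0 \<notin> msupp (\<nu>s k) \<and> z \<notin> msupp (\<nu>s k) \<and>
            integrable (\<nu>s k) (\<lambda>\<xi>. K (z - \<xi>) - K (z0 - \<xi>)))
         \<and> integrable \<nu> (\<lambda>\<xi>. K (z - \<xi>) - K (z0 - \<xi>))
         \<and> (\<lambda>k. Ctilde1 (\<nu>s k) z0 z) \<longlonglongrightarrow> Ctilde1 \<nu> z0 z"
proof -
  note bm = assms(2)
  obtain r1 where r1: "r1 > 0" "emeasure \<nu> (ball z0 r1) = 0"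
    using z0 unfolding msupp_def by (auto simp: not_less)
  obtain r2 where r2: "r2 > 0" "emeasure \<nu> (ball z r2) = 0"
    using z unfolding msupp_def by (auto simp: not_less)
  define \<rho> where "\<rho> = min r1 r2"
  have \<rho>: "\<rho> > 0" using r1 r2 by (simp add: \<rho>_def)
  have n0: "emeasure \<nu> (ball z0 \<rho>) = 0"
  proof -
    have "emeasure \<nu> (ball z0 \<rho>) \<le> emeasure \<nu> (ball z0 r1)"
      using bm_sets[OF bm] by (intro emeasure_mono) (auto simp: \<rho>_def)
    then show ?thesis using r1 by simp
  qed
  have n1: "emeasure \<nu> (ball z \<rho>) = 0"
  proof -
    have "emeasure \<nu> (ball z \<rho>) \<le> emeasure \<nu> (ball z r2)"
      using bm_sets[OF bm] by (intro emeasure_mono) (auto simp: \<rho>_def)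
    then show ?thesis using r2 by simp
  qed
  define \<delta> where "\<delta> = \<rho>/2"
  have \<delta>: "\<delta> > 0" using \<rho> by (simp add: \<delta>_def)
  have m0: "emeasure \<nu> (ball z0 \<delta>) = 0"
  proof -
    have "emeasure \<nu> (ball z0 \<delta>) \<le> emeasure \<nu> (ball z0 \<rho>)"
      using bm_sets[OF bm] \<rho> by (intro emeasure_mono) (auto simp: \<delta>_def)
    then show ?thesis using n0 by simp
  qed
  have m1: "emeasure \<nu> (ball z \<delta>) = 0"
  proof -
    have "emeasure \<nu> (ball z \<delta>) \<le> emeasure \<nu> (ball z \<rho>)"
      using bm_sets[OF bm] \<rho> by (intro emeasure_mono) (auto simp: \<delta>_def)
    then show ?thesis using n1 by simp
  qed
  have ev: "\<forall>\<^sub>F k in sequentially. emeasure (\<nu>s k) (ball z0 \<delta>) = 0 \<and> emeasure (\<nu>s k) (ball z \<delta>) = 0"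
    using eventually_null_ball[OF meas bm c0 reg conv \<rho> n0] eventually_null_ball[OF meas bm c0 reg conv \<rho> n1]
    unfolding \<delta>_def by (rule eventually_conj)
  define F where "F x = Kc \<delta> (z - x) - Kc \<delta> (z0 - x)" for x
  define f where "f x = K (z - x) - K (z0 - x)" for x
  have cF: "continuous_on UNIV F"
    unfolding F_def by (intro continuous_intros continuous_on_compose2[OF Kc_cont[OF \<delta>]]) auto
  have Fb: "norm (F x) \<le> 2/\<delta>" for x
  proof -
    have "norm (F x) \<le> norm (Kc \<delta> (z - x)) + norm (Kc \<delta> (z0 - x))" unfolding F_def by (rule norm_triangle_ineq4)
    also have "\<dots> \<le> 1/\<delta> + 1/\<delta>" by (intro add_mono Kc_bound[OF \<delta>])
    finally show ?thesis by simp
  qed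
  define R0 where "R0 = 2*(norm z + norm z0) + 2*\<delta>"
  have R0: "R0 > 0" using \<delta> by (simp add: R0_def add_nonneg_pos)
  have Ft: "norm (F x) \<le> 4 * norm (z - z0) / (norm x)^2" if "R0 \<le> norm x" for x
    using F_tail[OF \<delta>, of z z0 x] that by (simp add: F_def R0_def)
  define C where "C = max C0 0"
  have nc: "nice C (\<nu>s k)" for k using reg[of k] nice_max unfolding AD_regular_def C_def by blast
  have C: "C \<ge> 0" by (simp add: C_def)
  have A: "4 * norm (z - z0) \<ge> 0" by simp
  have Re: "integrable \<nu> (\<lambda>x. Re (F x)) \<and> (\<forall>k. integrable (\<nu>s k) (\<lambda>x. Re (F x))) \<and>
         (\<lambda>k. integral\<^sup>L (\<nu>s k) (\<lambda>x. Re (F x))) \<longlonglongrightarrow> integral\<^sup>L \<nu> (\<lambda>x. Re (F x))"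
  proof (rule conv_real[OF meas bm nc C conv _ _ _ R0 A])
    show "continuous_on UNIV (\<lambda>x. Re (F x))" by (intro continuous_intros cF)
    show "\<bar>Re (F x)\<bar> \<le> 2/\<delta>" for x using abs_Re_le_cmod[of "F x"] Fb[of x] by linarith
    show "\<bar>Re (F x)\<bar> \<le> 4 * norm (z - z0) / (norm x)^2" if "R0 \<le> norm x" for x
      using abs_Re_le_cmod[of "F x"] Ft[OF that] by linarith
  qed
  have Im: "integrable \<nu> (\<lambda>x. Im (F x)) \<and> (\<forall>k. integrable (\<nu>s k) (\<lambda>x. Im (F x))) \<and>
         (\<lambda>k. integral\<^sup>L (\<nu>s k) (\<lambda>x. Im (F x))) \<longlonglongrightarrow> integral\<^sup>L \<nu> (\<lambda>x. Im (F x))"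
  proof (rule conv_real[OF meas bm nc C conv _ _ _ R0 A])
    show "continuous_on UNIV (\<lambda>x. Im (F x))" by (intro continuous_intros cF)
    show "\<bar>Im (F x)\<bar> \<le> 2/\<delta>" for x using abs_Im_le_cmod[of "F x"] Fb[of x] by linarith
    show "\<bar>Im (F x)\<bar> \<le> 4 * norm (z - z0) / (norm x)^2" if "R0 \<le> norm x" for x
      using abs_Im_le_cmod[of "F x"] Ft[OF that] by linarith
  qed
  have intF: "integrable \<nu> F" using Re Im by (intro integrable_from_ReIm) auto
  have intFk: "integrable (\<nu>s k) F" for k using Re Im by (intro integrable_from_ReIm) auto
  have limF: "(\<lambda>k. integral\<^sup>L (\<nu>s k) F) \<longlonglongrightarrow> integral\<^sup>L \<nu> F"
    unfolding tendsto_complex_iff using Re Im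
    by (simp add: integral_Re[OF intF, symmetric] integral_Im[OF intF, symmetric]
        integral_Re[OF intFk, symmetric] integral_Im[OF intFk, symmetric])
  have AEn: "AE x in \<nu>. F x = f x" unfolding F_def f_def by (rule AE_F[OF bm m1 m0])
  have fm: "f \<in> borel_measurable \<mu>" if "borel_measure_on_C \<mu>" for \<mu>
    unfolding f_def by (rule f_meas[OF that])
  have Fm: "F \<in> borel_measurable \<mu>" if "borel_measure_on_C \<mu>" for \<mu>
    by (rule bm_cont_meas[OF that cF])
  have intf: "integrable \<nu> f" by (rule integrable_cong_AE_imp[OF intF fm[OF bm] AEn])
  have eqn: "Ctilde1 \<nu> z0 z = integral\<^sup>L \<nu> F"
    unfolding Ctilde1_def f_def[symmetric] by (rule integral_cong_AE[OF Fm[OF bm] fm[OF bm] AEn, symmetric])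
  have evk: "\<forall>\<^sub>F k in sequentially. z0 \<notin> msupp (\<nu>s k) \<and> z \<notin> msupp (\<nu>s k) \<and>
            integrable (\<nu>s k) f \<and> Ctilde1 (\<nu>s k) z0 z = integral\<^sup>L (\<nu>s k) F"
    using ev
  proof eventually_elim
    case (elim k)
    have AEk: "AE x in \<nu>s k. F x = f x" unfolding F_def f_def
      by (rule AE_F[OF meas]) (use elim in auto)
    have "z0 \<notin> msupp (\<nu>s k)" using elim \<delta> unfolding msupp_def by auto
    moreover have "z \<notin> msupp (\<nu>s k)" using elim \<delta> unfolding msupp_def by auto
    moreover have "integrable (\<nu>s k) f" by (rule integrable_cong_AE_imp[OF intFk fm[OF meas] AEk])
    moreover have "Ctilde1 (\<nu>s k) z0 z = integral\<^sup>L (\<nu>s k) F"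
      unfolding Ctilde1_def f_def[symmetric] by (rule integral_cong_AE[OF Fm[OF meas] fm[OF meas] AEk, symmetric])
    ultimately show ?case by blast
  qed
  have lim: "(\<lambda>k. Ctilde1 (\<nu>s k) z0 z) \<longlonglongrightarrow> Ctilde1 \<nu> z0 z"
  proof -
    have "\<forall>\<^sub>F k in sequentially. integral\<^sup>L (\<nu>s k) F = Ctilde1 (\<nu>s k) z0 z"
      using evk by (rule eventually_mono) simp
    from tendsto_cong[OF this] limF eqn show ?thesis by simp
  qed
  show ?thesis using evk intf lim unfolding f_def by (auto elim: eventually_mono)
qed


end
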